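(* Let $G$ and $H$ be nontrivial finite, simple, connected graphs. Then (i) $\gamma_P(G\circ H)=1$ if and only if $\gamma(G)=1$ and $\gamma_P(H)=1$; (ii) $\gamma_P(G\circ H)=2$ if and only if either $\gamma(G)=2$ and $\gamma_P(H)=1$, or $\mathrm{diam}(\overline{G})>2$ and $\gamma_P(H)>1$.
   Context: The lexicographic product $G\circ H$ has vertex set $V(G)\times V(H)$, with $(g,h)$ adjacent to $(g',h')$ iff $gg'\in E(G)$, or $g=g'$ and $hh'\in E(H)$. $\overline{G}$ is the complement of $G$ (its diameter is infinite if it is disconnected). $\gamma(G)$ is the domination number. For $U\subseteq V(G)$, $cl(U)$ is obtained by coloring $U$ black and repeatedly applying: if a black vertex has exactly one white neighbor, that neighbor becomes black. $S$ is a power dominating set if $cl(N[S])=V(G)$; $\gamma_P$ is the minimum size of a power dominating set. *)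

theory Defs
  imports Main "HOL-Library.Extended_Nat"
begin

definition simple_graph :: "'a set \<Rightarrow> ('a \<Rightarrow> 'a \<Rightarrow> bool) \<Rightarrow> bool" where
  "simple_graph V E \<longleftrightarrow> finite V \<and> (\<forall>x y. E x y \<longrightarrow> x \<in> V \<and> y \<in> V)
     \<and> (\<forall>x y. E x y \<longrightarrow> E y x) \<and> (\<forall>x. \<not> E x x)"

definition nontrivial_graph :: "'a set \<Rightarrow> ('a \<Rightarrow> 'a \<Rightarrow> bool) \<Rightarrow> bool" where
  "nontrivial_graph V E \<longleftrightarrow> card V \<ge> 2"

fun walk_len :: "'a set \<Rightarrow> ('a \<Rightarrow> 'a \<Rightarrow> bool) \<Rightarrow> nat \<Rightarrow> 'a \<Rightarrow> 'a \<Rightarrow> bool" where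
  "walk_len V E 0 u v \<longleftrightarrow> u \<in> V \<and> u = v"
| "walk_len V E (Suc n) u v \<longleftrightarrow> (\<exists>w. E u w \<and> w \<in> V \<and> u \<in> V \<and> walk_len V E n w v)"

definition connected_graph :: "'a set \<Rightarrow> ('a \<Rightarrow> 'a \<Rightarrow> bool) \<Rightarrow> bool" where
  "connected_graph V E \<longleftrightarrow> (\<forall>u\<in>V. \<forall>v\<in>V. \<exists>n. walk_len V E n u v)"

definition gdist :: "'a set \<Rightarrow> ('a \<Rightarrow> 'a \<Rightarrow> bool) \<Rightarrow> 'a \<Rightarrow> 'a \<Rightarrow> enat" where
  "gdist V E u v = (if \<exists>n. walk_len V E n u v
                    then enat (LEAST n. walk_len V E n u v) else \<infinity>)"

definition diam :: "'a set \<Rightarrow> ('a \<Rightarrow> 'a \<Rightarrow> bool) \<Rightarrow> enat" where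
  "diam V E = (SUP p\<in>V \<times> V. gdist V E (fst p) (snd p))"

definition complement :: "'a set \<Rightarrow> ('a \<Rightarrow> 'a \<Rightarrow> bool) \<Rightarrow> ('a \<Rightarrow> 'a \<Rightarrow> bool)" where
  "complement V E = (\<lambda>x y. x \<in> V \<and> y \<in> V \<and> x \<noteq> y \<and> \<not> E x y)"

definition lex_edges :: "'a set \<Rightarrow> ('a \<Rightarrow> 'a \<Rightarrow> bool) \<Rightarrow> 'b set \<Rightarrow> ('b \<Rightarrow> 'b \<Rightarrow> bool)
    \<Rightarrow> ('a \<times> 'b \<Rightarrow> 'a \<times> 'b \<Rightarrow> bool)" where
  "lex_edges VG EG VH EH = (\<lambda>(g,h) (g',h'). g \<in> VG \<and> g' \<in> VG \<and> h \<in> VH \<and> h' \<in> VH \<and>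
      (EG g g' \<or> (g = g' \<and> EH h h')))"

definition nbhd :: "('a \<Rightarrow> 'a \<Rightarrow> bool) \<Rightarrow> 'a \<Rightarrow> 'a set" where
  "nbhd E v = {u. E v u}"

definition closed_nbhd_set :: "'a set \<Rightarrow> ('a \<Rightarrow> 'a \<Rightarrow> bool) \<Rightarrow> 'a set \<Rightarrow> 'a set" where
  "closed_nbhd_set V E S = S \<union> {u. \<exists>v\<in>S. E v u}"

definition dominating_set :: "'a set \<Rightarrow> ('a \<Rightarrow> 'a \<Rightarrow> bool) \<Rightarrow> 'a set \<Rightarrow> bool" where
  "dominating_set V E S \<longleftrightarrow> S \<subseteq> V \<and> closed_nbhd_set V E S = V"

definition domination_number :: "'a set \<Rightarrow> ('a \<Rightarrow> 'a \<Rightarrow> bool) \<Rightarrow> nat" where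
  "domination_number V E = (LEAST k. \<exists>S. dominating_set V E S \<and> card S = k)"

text \<open>Zero forcing closure: color U black, then repeatedly a black vertex with
exactly one white neighbour forces that neighbour.  The result is independent
of the order, so we define it as the least set closed under the rule.\<close>
inductive_set zf_closure :: "'a set \<Rightarrow> ('a \<Rightarrow> 'a \<Rightarrow> bool) \<Rightarrow> 'a set \<Rightarrow> 'a set"
  for V E U where
  base: "u \<in> U \<Longrightarrow> u \<in> zf_closure V E U"
| force: "\<lbrakk> v \<in> zf_closure V E U; E v w; w \<in> V;
           \<forall>x. E v x \<and> x \<in> V \<and> x \<noteq> w \<longrightarrow> x \<in> zf_closure V E U \<rbrakk>
          \<Longrightarrow> w \<in> zf_closure V E U"

definition power_dominating_set :: "'a set \<Rightarrow> ('a \<Rightarrow> 'a \<Rightarrow> bool) \<Rightarrow> 'a set \<Rightarrow> bool" where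
  "power_dominating_set V E S \<longleftrightarrow> S \<subseteq> V \<and> zf_closure V E (closed_nbhd_set V E S) = V"

definition power_domination_number :: "'a set \<Rightarrow> ('a \<Rightarrow> 'a \<Rightarrow> bool) \<Rightarrow> nat" where
  "power_domination_number V E = (LEAST k. \<exists>S. power_dominating_set V E S \<and> card S = k)"

end

theory Submission imports Defs begin


lemma zf_sub: "x \<in> zf_closure V E U \<Longrightarrow> x \<in> U \<union> V"
  by (induction rule: zf_closure.induct) blast+

lemma zf_subV: assumes "U \<subseteq> V" shows "zf_closure V E U \<subseteq> V"
proof
  fix x assume "x \<in> zf_closure V E U"
  then have "x \<in> U \<union> V" by (rule zf_sub)
  then show "x \<in> V" using assms by blast
qed

lemma zf_empty: "zf_closure V E {} = {}"
proof -
  have "x \<notin> zf_closure V E {}" for x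
  proof
    assume "x \<in> zf_closure V E {}" then show False
      by (induction rule: zf_closure.induct) blast+
  qed
  then show ?thesis by blast
qed

lemma zf_inv:
  assumes "U \<subseteq> T"
    and "\<And>v w. v \<in> T \<Longrightarrow> E v w \<Longrightarrow> w \<in> V \<Longrightarrow> (\<forall>x. E v x \<and> x \<in> V \<and> x \<noteq> w \<longrightarrow> x \<in> T) \<Longrightarrow> w \<in> T"
  shows "zf_closure V E U \<subseteq> T"
proof
  fix x assume "x \<in> zf_closure V E U" then show "x \<in> T"
  proof (induction rule: zf_closure.induct)
    case (base u) then show ?case using assms(1) by blast
  next
    case (force v w) then show ?case using assms(2)[of v w] by blast
  qed
qed

lemma cn_sub: "\<forall>x y. E x y \<longrightarrow> x \<in> V \<and> y \<in> V \<Longrightarrow> S \<subseteq> V \<Longrightarrow> closed_nbhd_set V E S \<subseteq> V"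
  unfolding closed_nbhd_set_def by blast

lemma least_facts:
  fixes P :: "'c set \<Rightarrow> bool"
  assumes ex: "P S0" and nE: "\<not> P {}" and fin: "\<And>S. P S \<Longrightarrow> finite S"
  shows "(LEAST k. \<exists>S. P S \<and> card S = k) = 1 \<longleftrightarrow> (\<exists>a. P {a})"
    and "(LEAST k. \<exists>S. P S \<and> card S = k) = 2 \<longleftrightarrow> \<not>(\<exists>a. P {a}) \<and> (\<exists>a b. a \<noteq> b \<and> P {a,b})"
    and "(LEAST k. \<exists>S. P S \<and> card S = k) \<noteq> 0"
proof -
  define L where "L = (LEAST k. \<exists>S. P S \<and> card S = k)"
  have ex': "\<exists>S. P S \<and> card S = L" unfolding L_def by (rule LeastI[of _ "card S0"]) (use ex in blast)
  have le: "L \<le> card S" if "P S" for S unfolding L_def by (rule Least_le) (use that in blast)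
  have c0: "card S \<noteq> 0" if "P S" for S proof
    assume "card S = 0" then have "S = {}" using fin[OF that] by simp
    then show False using nE that by simp
  qed
  show L0: "L \<noteq> 0" using ex' c0 by blast
  show L1: "L = 1 \<longleftrightarrow> (\<exists>a. P {a})"
  proof
    assume "L = 1"
    then obtain S where S: "P S" "card S = 1" using ex' by blast
    then show "\<exists>a. P {a}" by (auto simp: card_1_singleton_iff)
  next
    assume "\<exists>a. P {a}" then obtain a where "P {a}" by blast
    then have "L \<le> card {a}" using le by blast
    then have "L \<le> 1" by simp
    then show "L = 1" using L0 by simp
  qed
  show "L = 2 \<longleftrightarrow> \<not>(\<exists>a. P {a}) \<and> (\<exists>a b. a \<noteq> b \<and> P {a,b})"
  proof
    assume L2: "L = 2"
    then obtain S where S: "P S" "card S = 2" using ex' by blast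
    then obtain x y where "S = {x,y}" "x \<noteq> y" by (auto simp: card_2_iff)
    then have "\<exists>a b. a \<noteq> b \<and> P {a,b}" using S by blast
    moreover have "\<not>(\<exists>a. P {a})" using L1 L2 by simp
    ultimately show "\<not>(\<exists>a. P {a}) \<and> (\<exists>a b. a \<noteq> b \<and> P {a,b})" by blast
  next
    assume h: "\<not>(\<exists>a. P {a}) \<and> (\<exists>a b. a \<noteq> b \<and> P {a,b})"
    then obtain a b where "a \<noteq> b" "P {a,b}" by blast
    then have "L \<le> card {a,b}" using le by blast
    then have "L \<le> 2" using \<open>a \<noteq> b\<close> by simp
    moreover have "L \<noteq> 1" using L1 h by blast
    ultimately show "L = 2" using L0 by presburger
  qed
qed

lemma pdn_facts:
  assumes "finite V" "V \<noteq> {}" "\<forall>x y. E x y \<longrightarrow> x \<in> V \<and> y \<in> V"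
  shows "power_domination_number V E = 1 \<longleftrightarrow> (\<exists>a. power_dominating_set V E {a})"
    and "power_domination_number V E = 2 \<longleftrightarrow> \<not>(\<exists>a. power_dominating_set V E {a}) \<and> (\<exists>a b. a \<noteq> b \<and> power_dominating_set V E {a,b})"
    and "power_domination_number V E \<noteq> 0"
proof -
  have cnV: "closed_nbhd_set V E V = V" using assms(3) by (auto simp: closed_nbhd_set_def)
  have "zf_closure V E V = V" using zf_subV[of V V E] zf_closure.base[of _ V] by blast
  then have a: "power_dominating_set V E V" by (simp add: power_dominating_set_def cnV)
  have b: "\<not> power_dominating_set V E {}"
    using assms(2) by (simp add: power_dominating_set_def zf_empty closed_nbhd_set_def)
  have c: "\<And>S. power_dominating_set V E S \<Longrightarrow> finite S"
    using assms(1) by (auto simp: power_dominating_set_def intro: finite_subset)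
  show "power_domination_number V E = 1 \<longleftrightarrow> (\<exists>a. power_dominating_set V E {a})"
    unfolding power_domination_number_def by (rule least_facts(1)[OF a b c])
  show "power_domination_number V E = 2 \<longleftrightarrow> \<not>(\<exists>a. power_dominating_set V E {a}) \<and> (\<exists>a b. a \<noteq> b \<and> power_dominating_set V E {a,b})"
    unfolding power_domination_number_def by (rule least_facts(2)[OF a b c])
  show "power_domination_number V E \<noteq> 0"
    unfolding power_domination_number_def by (rule least_facts(3)[OF a b c])
qed

lemma dn_facts:
  assumes "finite V" "V \<noteq> {}" "\<forall>x y. E x y \<longrightarrow> x \<in> V \<and> y \<in> V"
  shows "domination_number V E = 1 \<longleftrightarrow> (\<exists>a. dominating_set V E {a})"
    and "domination_number V E = 2 \<longleftrightarrow> \<not>(\<exists>a. dominating_set V E {a}) \<and> (\<exists>a b. a \<noteq> b \<and> dominating_set V E {a,b})"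
proof -
  have cnV: "closed_nbhd_set V E V = V" using assms(3) by (auto simp: closed_nbhd_set_def)
  then have a: "dominating_set V E V" by (simp add: dominating_set_def)
  have b: "\<not> dominating_set V E {}"
    using assms(2) by (simp add: dominating_set_def closed_nbhd_set_def)
  have c: "\<And>S. dominating_set V E S \<Longrightarrow> finite S"
    using assms(1) by (auto simp: dominating_set_def intro: finite_subset)
  show "domination_number V E = 1 \<longleftrightarrow> (\<exists>a. dominating_set V E {a})"
    unfolding domination_number_def by (rule least_facts(1)[OF a b c])
  show "domination_number V E = 2 \<longleftrightarrow> \<not>(\<exists>a. dominating_set V E {a}) \<and> (\<exists>a b. a \<noteq> b \<and> dominating_set V E {a,b})"
    unfolding domination_number_def by (rule least_facts(2)[OF a b c])
qed




lemma lex_simp[simp]: "lex_edges VG EG VH EH (a,b) (c,d) \<longleftrightarrow>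
   a \<in> VG \<and> c \<in> VG \<and> b \<in> VH \<and> d \<in> VH \<and> (EG a c \<or> (a = c \<and> EH b d))"
  by (simp add: lex_edges_def)

lemma other_vertex: assumes "card V \<ge> 2" "y \<in> V" obtains z where "z \<in> V" "z \<noteq> y"
proof -
  have "\<not> V \<subseteq> {y}"
  proof
    assume h: "V \<subseteq> {y}"
    have "card V \<le> card {y}" by (rule card_mono) (simp_all add: h)
    then show False using assms by simp
  qed
  then show ?thesis using that by blast
qed

lemma two_white:
  assumes sg: "simple_graph V E" and cg: "connected_graph V E" and c2: "card V \<ge> 2"
    and y: "y \<in> V" "y \<notin> zf_closure V E U"
  shows "\<exists>z\<in>V. z \<noteq> y \<and> z \<notin> zf_closure V E U"
proof (rule ccontr)
  assume a: "\<not> ?thesis"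
  obtain y' where y': "y' \<in> V" "y' \<noteq> y" using other_vertex[OF c2 y(1)] by blast
  obtain n where n: "walk_len V E n y y'" using cg y y' unfolding connected_graph_def by blast
  obtain m where "n = Suc m" using n y' by (cases n) auto
  then obtain w where w: "E y w" "w \<in> V" using n by auto
  have wy: "w \<noteq> y" using w sg by (auto simp: simple_graph_def)
  have Ewy: "E w y" using w sg by (auto simp: simple_graph_def)
  have "w \<in> zf_closure V E U" using a w wy by blast
  moreover have "\<forall>x. E w x \<and> x \<in> V \<and> x \<noteq> y \<longrightarrow> x \<in> zf_closure V E U" using a by blast
  ultimately have "y \<in> zf_closure V E U" using zf_closure.force[of w V E U y] Ewy y(1) by blast
  then show False using y by blast
qed

lemma prod_dom:
  assumes sG: "simple_graph VG EG" and c2: "card VH \<ge> 2" and S: "S \<subseteq> VG \<times> VH"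
    and Z: "zf_closure (VG\<times>VH) (lex_edges VG EG VH EH) (closed_nbhd_set (VG\<times>VH) (lex_edges VG EG VH EH) S) = VG \<times> VH"
  shows "dominating_set VG EG (fst ` S)"
proof -
  have EGin: "\<forall>x y. EG x y \<longrightarrow> x \<in> VG \<and> y \<in> VG" using sG by (simp add: simple_graph_def)
  have sub: "fst ` S \<subseteq> VG" using S by auto
  have "VG \<subseteq> closed_nbhd_set VG EG (fst ` S)"
  proof
    fix x assume x: "x \<in> VG"
    show "x \<in> closed_nbhd_set VG EG (fst ` S)"
    proof (rule ccontr)
      assume nx: "x \<notin> closed_nbhd_set VG EG (fst ` S)"
      define T where "T = VG \<times> VH - {x} \<times> VH"
      have "zf_closure (VG\<times>VH) (lex_edges VG EG VH EH) (closed_nbhd_set (VG\<times>VH) (lex_edges VG EG VH EH) S) \<subseteq> T"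
      proof (rule zf_inv)
        show "closed_nbhd_set (VG \<times> VH) (lex_edges VG EG VH EH) S \<subseteq> T"
        proof
          fix z assume z: "z \<in> closed_nbhd_set (VG \<times> VH) (lex_edges VG EG VH EH) S"
          obtain c d where zcd: "z = (c,d)" by fastforce
          show "z \<in> T"
          proof (cases "z \<in> S")
            case True
            then have "c \<in> fst ` S" using zcd by force
            then have "c \<noteq> x" using nx by (auto simp: closed_nbhd_set_def)
            then show ?thesis using True S zcd T_def by auto
          next
            case False
            then obtain a b where ab: "(a,b) \<in> S" "lex_edges VG EG VH EH (a,b) (c,d)"
              using z zcd by (auto simp: closed_nbhd_set_def)
            then have "c \<in> closed_nbhd_set VG EG (fst ` S)"
              by (force simp: closed_nbhd_set_def)
            then show ?thesis using nx ab zcd T_def by auto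
          qed
        qed
      next
        fix v w
        assume v: "v \<in> T" and e: "lex_edges VG EG VH EH v w" and w: "w \<in> VG \<times> VH"
          and oth: "\<forall>xa. lex_edges VG EG VH EH v xa \<and> xa \<in> VG \<times> VH \<and> xa \<noteq> w \<longrightarrow> xa \<in> T"
        show "w \<in> T"
        proof (rule ccontr)
          assume "w \<notin> T"
          then obtain y where wy: "w = (x,y)" "y \<in> VH" using w T_def by auto
          obtain a b where vab: "v = (a,b)" by fastforce
          have ax: "a \<noteq> x" using v vab T_def by auto
          have Eax: "EG a x" using e vab wy ax by auto
          obtain y' where y': "y' \<in> VH" "y' \<noteq> y" using other_vertex[OF c2 wy(2)] by blast
          have "lex_edges VG EG VH EH v (x,y')" using e vab wy y' Eax by auto
          then have "(x,y') \<in> T" using oth y' wy x by auto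
          then show False using T_def by auto
        qed
      qed
      moreover obtain y where "y \<in> VH" using c2 by (metis other_vertex card.empty not_numeral_le_zero ex_in_conv)
      ultimately show False using Z x T_def by auto
    qed
  qed
  moreover have "closed_nbhd_set VG EG (fst ` S) \<subseteq> VG" using cn_sub[OF EGin sub] .
  ultimately show ?thesis using sub by (auto simp: dominating_set_def)
qed




lemma prod_block:
  assumes sG: "simple_graph VG EG" and sH: "simple_graph VH EH" and cH: "connected_graph VH EH"
    and c2: "card VH \<ge> 2" and g1: "g1 \<in> VG" "h1 \<in> VH" and S: "S \<subseteq> VG \<times> VH"
    and oth: "\<forall>s\<in>S. s = (g1,h1) \<or> (fst s \<noteq> g1 \<and> \<not> EG (fst s) g1)"
    and C: "zf_closure VH EH (closed_nbhd_set VH EH {h1}) \<noteq> VH"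
  shows "zf_closure (VG\<times>VH) (lex_edges VG EG VH EH) (closed_nbhd_set (VG\<times>VH) (lex_edges VG EG VH EH) S) \<noteq> VG\<times>VH"
proof
  define C1 where "C1 = zf_closure VH EH (closed_nbhd_set VH EH {h1})"
  have EHin: "\<forall>x y. EH x y \<longrightarrow> x \<in> VH \<and> y \<in> VH" using sH by (simp add: simple_graph_def)
  have C1sub: "C1 \<subseteq> VH" unfolding C1_def
    by (rule zf_subV, rule cn_sub[OF EHin]) (use g1 in auto)
  obtain y0 where y0: "y0 \<in> VH" "y0 \<notin> C1" using C C1sub C1_def by blast
  have h1C: "h1 \<in> C1" unfolding C1_def by (rule zf_closure.base) (simp add: closed_nbhd_set_def)
  have nbC: "EH h1 d \<Longrightarrow> d \<in> C1" for d unfolding C1_def by (rule zf_closure.base) (simp add: closed_nbhd_set_def)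
  define T where "T = VG \<times> VH - {g1} \<times> (VH - C1)"
  assume Z: "zf_closure (VG\<times>VH) (lex_edges VG EG VH EH) (closed_nbhd_set (VG\<times>VH) (lex_edges VG EG VH EH) S) = VG\<times>VH"
  have "zf_closure (VG\<times>VH) (lex_edges VG EG VH EH) (closed_nbhd_set (VG\<times>VH) (lex_edges VG EG VH EH) S) \<subseteq> T"
  proof (rule zf_inv)
    show "closed_nbhd_set (VG \<times> VH) (lex_edges VG EG VH EH) S \<subseteq> T"
    proof
      fix z assume z: "z \<in> closed_nbhd_set (VG \<times> VH) (lex_edges VG EG VH EH) S"
      obtain c d where zcd: "z = (c,d)" by fastforce
      show "z \<in> T"
      proof (cases "z \<in> S")
        case True
        then show ?thesis using oth S zcd T_def h1C by auto
      next
        case False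
        then obtain a b where ab: "(a,b) \<in> S" "lex_edges VG EG VH EH (a,b) (c,d)"
          using z zcd by (auto simp: closed_nbhd_set_def)
        show ?thesis
        proof (cases "(a,b) = (g1,h1)")
          case True
          then have "(EG g1 c \<and> c \<noteq> g1) \<or> (c = g1 \<and> d \<in> C1)"
            using ab sG nbC by (auto simp: simple_graph_def)
          then show ?thesis using ab zcd T_def by auto
        next
          case False
          then have "a \<noteq> g1" "\<not> EG a g1" using oth ab by auto
          then show ?thesis using ab zcd T_def by auto
        qed
      qed
    qed
  next
    fix v w
    assume v: "v \<in> T" and e: "lex_edges VG EG VH EH v w" and w: "w \<in> VG \<times> VH"
      and ot: "\<forall>xa. lex_edges VG EG VH EH v xa \<and> xa \<in> VG \<times> VH \<and> xa \<noteq> w \<longrightarrow> xa \<in> T"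
    show "w \<in> T"
    proof (rule ccontr)
      assume "w \<notin> T"
      then obtain y where wy: "w = (g1,y)" "y \<in> VH" "y \<notin> C1" using w T_def by auto
      obtain a b where vab: "v = (a,b)" by fastforce
      show False
      proof (cases "a = g1")
        case True
        then have bC: "b \<in> C1" using v vab T_def by auto
        have Eby: "EH b y" using e vab wy True sG sH by (auto simp: simple_graph_def)
        have "\<forall>x. EH b x \<and> x \<in> VH \<and> x \<noteq> y \<longrightarrow> x \<in> C1"
        proof (intro allI impI)
          fix x assume x: "EH b x \<and> x \<in> VH \<and> x \<noteq> y"
          then have "lex_edges VG EG VH EH v (g1,x)" using vab True g1 EHin by auto
          then have "(g1,x) \<in> T" using ot x wy g1 by auto
          then show "x \<in> C1" using T_def x by auto
        qed
        then have "y \<in> C1" unfolding C1_def using zf_closure.force[of b VH EH _ y] Eby wy(2) bC C1_def by blast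
        then show False using wy by blast
      next
        case False
        then have Eag: "EG a g1" using e vab wy by auto
        obtain z where z: "z \<in> VH" "z \<noteq> y" "z \<notin> C1"
          using two_white[OF sH cH c2 wy(2)] wy(3) unfolding C1_def by blast
        have "lex_edges VG EG VH EH v (g1,z)" using e vab wy z Eag by auto
        then have "(g1,z) \<in> T" using ot z wy g1 by auto
        then show False using T_def z by auto
      qed
    qed
  qed
  then show False using Z y0 g1 T_def by auto
qed

lemma prod_layer:
  assumes sG: "simple_graph VG EG" and sH: "simple_graph VH EH"
    and gh: "(g,h) \<in> S" and S: "S \<subseteq> VG \<times> VH"
    and C: "zf_closure VH EH (closed_nbhd_set VH EH {h}) = VH"
  shows "{g} \<times> VH \<subseteq> zf_closure (VG\<times>VH) (lex_edges VG EG VH EH) (closed_nbhd_set (VG\<times>VH) (lex_edges VG EG VH EH) S)"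
proof -
  define Z where "Z = zf_closure (VG\<times>VH) (lex_edges VG EG VH EH) (closed_nbhd_set (VG\<times>VH) (lex_edges VG EG VH EH) S)"
  have gV: "g \<in> VG" "h \<in> VH" using gh S by auto
  have EHin: "\<forall>x y. EH x y \<longrightarrow> x \<in> VH \<and> y \<in> VH" using sH by (simp add: simple_graph_def)
  have EGin: "\<forall>x y. EG x y \<longrightarrow> x \<in> VG \<and> y \<in> VG" using sG by (simp add: simple_graph_def)
  have inZ: "p \<in> closed_nbhd_set (VG\<times>VH) (lex_edges VG EG VH EH) S \<Longrightarrow> p \<in> Z" for p
    unfolding Z_def by (rule zf_closure.base)
  have nb: "EG g x \<Longrightarrow> y \<in> VH \<Longrightarrow> (x,y) \<in> Z" for x y
    by (rule inZ) (use gh gV EGin in \<open>force simp: closed_nbhd_set_def\<close>)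
  have "y \<in> zf_closure VH EH (closed_nbhd_set VH EH {h}) \<Longrightarrow> (g,y) \<in> Z" for y
  proof (induction rule: zf_closure.induct)
    case (base u)
    then show ?case
      by (intro inZ) (use gh gV EHin in \<open>force simp: closed_nbhd_set_def\<close>)
  next
    case (force v w)
    have vV: "v \<in> VH" using force EHin by blast
    have e: "lex_edges VG EG VH EH (g,v) (g,w)" using gV vV force by auto
    have all: "\<forall>x. lex_edges VG EG VH EH (g,v) x \<and> x \<in> VG\<times>VH \<and> x \<noteq> (g,w) \<longrightarrow> x \<in> Z"
    proof (intro allI impI)
      fix x assume x: "lex_edges VG EG VH EH (g,v) x \<and> x \<in> VG\<times>VH \<and> x \<noteq> (g,w)"
      obtain a b where xab: "x = (a,b)" by fastforce
      show "x \<in> Z"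
      proof (cases "EG g a")
        case True then show ?thesis using nb x xab by auto
      next
        case False then have "a = g" "EH v b" "b \<noteq> w" "b \<in> VH" using x xab by auto
        then show ?thesis using force.IH xab by blast
      qed
    qed
    have gvZ: "(g,v) \<in> Z" using force by blast
    have gw: "(g,w) \<in> VG\<times>VH" using gV force by blast
    show ?case
      using zf_closure.force[of "(g,v)" "VG\<times>VH" "lex_edges VG EG VH EH" "closed_nbhd_set (VG\<times>VH) (lex_edges VG EG VH EH) S" "(g,w)"]
        gvZ e gw all unfolding Z_def by blast
  qed
  then show ?thesis using C Z_def by auto
qed

lemma prod_cover:
  assumes sG: "simple_graph VG EG" and sH: "simple_graph VH EH" and S: "S \<subseteq> VG \<times> VH"
    and cov: "\<forall>x\<in>VG. (\<exists>h. (x,h) \<in> S \<and> zf_closure VH EH (closed_nbhd_set VH EH {h}) = VH) \<or> (\<exists>s\<in>S. EG (fst s) x)"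
  shows "power_dominating_set (VG\<times>VH) (lex_edges VG EG VH EH) S"
proof -
  define Z where "Z = zf_closure (VG\<times>VH) (lex_edges VG EG VH EH) (closed_nbhd_set (VG\<times>VH) (lex_edges VG EG VH EH) S)"
  have EPin: "\<forall>x y. lex_edges VG EG VH EH x y \<longrightarrow> x \<in> VG\<times>VH \<and> y \<in> VG\<times>VH"
    by (auto simp: lex_edges_def)
  have EGin: "\<forall>x y. EG x y \<longrightarrow> x \<in> VG \<and> y \<in> VG" using sG by (simp add: simple_graph_def)
  have "Z \<subseteq> VG\<times>VH" unfolding Z_def by (rule zf_subV, rule cn_sub[OF EPin S])
  moreover have "VG\<times>VH \<subseteq> Z"
  proof
    fix p assume p: "p \<in> VG\<times>VH"
    obtain x y where pxy: "p = (x,y)" "x \<in> VG" "y \<in> VH" using p by auto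
    show "p \<in> Z"
    proof (cases "\<exists>h. (x,h) \<in> S \<and> zf_closure VH EH (closed_nbhd_set VH EH {h}) = VH")
      case True
      then obtain h where "(x,h) \<in> S" "zf_closure VH EH (closed_nbhd_set VH EH {h}) = VH" by blast
      then show ?thesis using prod_layer[OF sG sH _ S] pxy Z_def by blast
    next
      case False
      then obtain a b where ab: "(a,b) \<in> S" "EG a x" using cov pxy by fastforce
      then have "lex_edges VG EG VH EH (a,b) (x,y)" using S EGin pxy by auto
      then have "p \<in> closed_nbhd_set (VG\<times>VH) (lex_edges VG EG VH EH) S"
        using ab pxy unfolding closed_nbhd_set_def by blast
      then show ?thesis unfolding Z_def by (rule zf_closure.base)
    qed
  qed
  ultimately show ?thesis using S Z_def by (auto simp: power_dominating_set_def)
qed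




lemma gdist_le: "gdist V E u v \<le> enat k \<longleftrightarrow> (\<exists>n\<le>k. walk_len V E n u v)"
proof (cases "\<exists>n. walk_len V E n u v")
  case True
  then have w: "walk_len V E (LEAST n. walk_len V E n u v) u v" by (rule LeastI_ex)
  show ?thesis using True
    apply (simp add: gdist_def)
    using w by (meson Least_le le_trans)
next
  case False then show ?thesis by (simp add: gdist_def)
qed

lemma ex_le2: "(\<exists>n\<le>(2::nat). P n) \<longleftrightarrow> P 0 \<or> P (Suc 0) \<or> P (Suc (Suc 0))"
proof -
  have "n \<le> (2::nat) \<longleftrightarrow> n = 0 \<or> n = Suc 0 \<or> n = Suc (Suc 0)" for n by linarith
  then show ?thesis by metis
qed

lemma walk_compl:
  shows "walk_len V (complement V E) 0 u v \<longleftrightarrow> u \<in> V \<and> u = v"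
    and "walk_len V (complement V E) (Suc 0) u v \<longleftrightarrow> complement V E u v"
    and "walk_len V (complement V E) (Suc (Suc 0)) u v \<longleftrightarrow> (\<exists>w. complement V E u w \<and> complement V E w v)"
proof -
  show "walk_len V (complement V E) 0 u v \<longleftrightarrow> u \<in> V \<and> u = v" by simp
  show "walk_len V (complement V E) (Suc 0) u v \<longleftrightarrow> complement V E u v"
    unfolding walk_len.simps complement_def by blast
  show "walk_len V (complement V E) (Suc (Suc 0)) u v \<longleftrightarrow> (\<exists>w. complement V E u w \<and> complement V E w v)"
    unfolding walk_len.simps complement_def by blast
qed

lemma diam_iff:
  assumes sG: "simple_graph VG EG"
  shows "diam VG (complement VG EG) > 2 \<longleftrightarrow>
     (\<exists>u v. EG u v \<and> (\<forall>w\<in>VG. w = u \<or> w = v \<or> EG u w \<or> EG v w))"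
proof -
  let ?K = "complement VG EG"
  have sym: "EG x y \<Longrightarrow> EG y x" for x y using sG by (simp add: simple_graph_def)
  have irr: "\<not> EG x x" for x using sG by (simp add: simple_graph_def)
  have EGin: "EG x y \<Longrightarrow> x \<in> VG \<and> y \<in> VG" for x y using sG by (simp add: simple_graph_def)
  have gd: "2 < gdist VG ?K u v \<longleftrightarrow>
      \<not> (u \<in> VG \<and> u = v \<or> ?K u v \<or> (\<exists>w. ?K u w \<and> ?K w v))" for u v
  proof -
    have "2 < gdist VG ?K u v \<longleftrightarrow> \<not> gdist VG ?K u v \<le> enat 2"
      by (simp add: not_le numeral_eq_enat)
    also have "\<dots> \<longleftrightarrow> \<not> (\<exists>n\<le>2. walk_len VG ?K n u v)" by (simp only: gdist_le)
    also have "\<dots> \<longleftrightarrow> \<not> (u \<in> VG \<and> u = v \<or> ?K u v \<or> (\<exists>w. ?K u w \<and> ?K w v))"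
      by (simp only: ex_le2 walk_compl)
    finally show ?thesis .
  qed
  have "diam VG ?K > 2 \<longleftrightarrow> (\<exists>p\<in>VG\<times>VG. 2 < gdist VG ?K (fst p) (snd p))"
    unfolding diam_def by (rule less_SUP_iff)
  also have "\<dots> \<longleftrightarrow> (\<exists>u v. EG u v \<and> (\<forall>w\<in>VG. w = u \<or> w = v \<or> EG u w \<or> EG v w))"
  proof
    assume "\<exists>p\<in>VG\<times>VG. 2 < gdist VG ?K (fst p) (snd p)"
    then obtain u v where uv: "u \<in> VG" "v \<in> VG" "2 < gdist VG ?K u v" by auto
    then have h: "u \<noteq> v" "\<not> ?K u v" "\<not> (\<exists>w. ?K u w \<and> ?K w v)" using gd by blast+
    have "EG u v" using h uv by (simp add: complement_def)
    moreover have "\<forall>w\<in>VG. w = u \<or> w = v \<or> EG u w \<or> EG v w"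
    proof
      fix w assume w: "w \<in> VG"
      show "w = u \<or> w = v \<or> EG u w \<or> EG v w"
      proof (rule ccontr)
        assume "\<not> ?thesis"
        then have "?K u w" "?K w v" using w uv sym unfolding complement_def by blast+
        then show False using h(3) by blast
      qed
    qed
    ultimately show "\<exists>u v. EG u v \<and> (\<forall>w\<in>VG. w = u \<or> w = v \<or> EG u w \<or> EG v w)" by blast
  next
    assume "\<exists>u v. EG u v \<and> (\<forall>w\<in>VG. w = u \<or> w = v \<or> EG u w \<or> EG v w)"
    then obtain u v where uv: "EG u v" "\<forall>w\<in>VG. w = u \<or> w = v \<or> EG u w \<or> EG v w" by blast
    have uvV: "u \<in> VG" "v \<in> VG" using EGin uv(1) by auto
    have "u \<noteq> v" using uv irr by auto
    moreover have "\<not> ?K u v" using uv by (simp add: complement_def)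
    moreover have "\<not> (\<exists>w. ?K u w \<and> ?K w v)"
    proof
      assume "\<exists>w. ?K u w \<and> ?K w v"
      then obtain w where "?K u w" "?K w v" by blast
      then have "w \<in> VG" "\<not> EG u w" "\<not> EG w v" "w \<noteq> u" "w \<noteq> v" unfolding complement_def by blast+
      then show False using uv(2) sym by blast
    qed
    ultimately have "2 < gdist VG ?K u v" using gd by blast
    then show "\<exists>p\<in>VG\<times>VG. 2 < gdist VG ?K (fst p) (snd p)" using uvV by force
  qed
  finally show ?thesis .
qed




theorem mainTheorem9:
  fixes VG :: "'a set" and EG :: "'a \<Rightarrow> 'a \<Rightarrow> bool"
    and VH :: "'b set" and EH :: "'b \<Rightarrow> 'b \<Rightarrow> bool"
  assumes "simple_graph VG EG" "connected_graph VG EG" "nontrivial_graph VG EG"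
      and "simple_graph VH EH" "connected_graph VH EH" "nontrivial_graph VH EH"
  shows "(power_domination_number (VG \<times> VH) (lex_edges VG EG VH EH) = 1 \<longleftrightarrow>
            domination_number VG EG = 1 \<and> power_domination_number VH EH = 1)
       \<and> (power_domination_number (VG \<times> VH) (lex_edges VG EG VH EH) = 2 \<longleftrightarrow>
            (domination_number VG EG = 2 \<and> power_domination_number VH EH = 1) \<or>
            (diam VG (complement VG EG) > 2 \<and> power_domination_number VH EH > 1))"
proof -
  note sG = assms(1) and sH = assms(4) and cH = assms(5)
  have c2G: "card VG \<ge> 2" and c2H: "card VH \<ge> 2" using assms(3,6) by (simp_all add: nontrivial_graph_def)
  have finG: "finite VG" and finH: "finite VH" using sG sH by (simp_all add: simple_graph_def)
  have neG: "VG \<noteq> {}" and neH: "VH \<noteq> {}" using c2G c2H by auto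
  have EGin: "\<forall>x y. EG x y \<longrightarrow> x \<in> VG \<and> y \<in> VG" using sG by (simp add: simple_graph_def)
  have EHin: "\<forall>x y. EH x y \<longrightarrow> x \<in> VH \<and> y \<in> VH" using sH by (simp add: simple_graph_def)
  have symG: "EG x y \<Longrightarrow> EG y x" for x y using sG by (simp add: simple_graph_def)
  have irrG: "\<not> EG x x" for x using sG by (simp add: simple_graph_def)
  have EPin: "\<forall>x y. lex_edges VG EG VH EH x y \<longrightarrow> x \<in> VG\<times>VH \<and> y \<in> VG\<times>VH"
    by (auto simp: lex_edges_def)
  have finP: "finite (VG\<times>VH)" using finG finH by simp
  have neP: "VG\<times>VH \<noteq> {}" using neG neH by simp
  note P = pdn_facts[OF finP neP EPin]
  note H = pdn_facts[OF finH neH EHin]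
  note D = dn_facts[OF finG neG EGin]
  note DI = diam_iff[OF sG]
  define PH1 where "PH1 = (\<exists>h. power_dominating_set VH EH {h})"
  define DE where "DE = (\<exists>u v. EG u v \<and> (\<forall>w\<in>VG. w = u \<or> w = v \<or> EG u w \<or> EG v w))"
  have Hgt: "power_domination_number VH EH > 1 \<longleftrightarrow> \<not> PH1"
  proof -
    have n1: "1 < n \<longleftrightarrow> n \<noteq> 1" if "n \<noteq> 0" for n :: nat using that by linarith
    show ?thesis unfolding n1[OF H(3)] H(1) PH1_def by blast
  qed
  have pdsH: "power_dominating_set VH EH {h} \<longleftrightarrow> h \<in> VH \<and> zf_closure VH EH (closed_nbhd_set VH EH {h}) = VH" for h
    by (simp add: power_dominating_set_def)
  have pdsP: "power_dominating_set (VG\<times>VH) (lex_edges VG EG VH EH) S \<longleftrightarrow> S \<subseteq> VG\<times>VH \<and>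
     zf_closure (VG\<times>VH) (lex_edges VG EG VH EH) (closed_nbhd_set (VG\<times>VH) (lex_edges VG EG VH EH) S) = VG\<times>VH" for S
    by (simp add: power_dominating_set_def)
  have domG: "dominating_set VG EG S \<longleftrightarrow> S \<subseteq> VG \<and> closed_nbhd_set VG EG S = VG" for S
    by (simp add: dominating_set_def)
  have Q1D: "dominating_set VG EG {g}" if "power_dominating_set (VG\<times>VH) (lex_edges VG EG VH EH) {(g,h)}" for g h
    using prod_dom[OF sG c2H, of "{(g,h)}" EH] that pdsP by simp
  have Q1H: "power_dominating_set VH EH {h}" if "power_dominating_set (VG\<times>VH) (lex_edges VG EG VH EH) {(g,h)}" for g h
  proof (rule ccontr)
    assume n: "\<not> ?thesis"
    have gh: "g \<in> VG" "h \<in> VH" using that pdsP by auto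
    have "zf_closure VH EH (closed_nbhd_set VH EH {h}) \<noteq> VH" using n gh pdsH by blast
    from prod_block[OF sG sH cH c2H gh, of "{(g,h)}", OF _ _ this] gh that pdsP show False by auto
  qed
  have D1DE: "DE" if "dominating_set VG EG {g}" for g
  proof -
    have g: "g \<in> VG" "closed_nbhd_set VG EG {g} = VG" using that domG by auto
    obtain u where u: "u \<in> VG" "u \<noteq> g" using other_vertex[OF c2G g(1)] by blast
    then have "EG g u" using g by (auto simp: closed_nbhd_set_def)
    moreover have "\<forall>w\<in>VG. w = g \<or> w = u \<or> EG g w \<or> EG u w" using g by (auto simp: closed_nbhd_set_def)
    ultimately show ?thesis unfolding DE_def by blast
  qed
  obtain h0 where h0: "h0 \<in> VH" using neH by blast
  have part1: "(\<exists>p. power_dominating_set (VG\<times>VH) (lex_edges VG EG VH EH) {p}) \<longleftrightarrow>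
      (\<exists>g. dominating_set VG EG {g}) \<and> PH1"
  proof
    assume "\<exists>p. power_dominating_set (VG\<times>VH) (lex_edges VG EG VH EH) {p}"
    then obtain g h where "power_dominating_set (VG\<times>VH) (lex_edges VG EG VH EH) {(g,h)}" by auto
    then show "(\<exists>g. dominating_set VG EG {g}) \<and> PH1" using Q1D Q1H PH1_def by blast
  next
    assume "(\<exists>g. dominating_set VG EG {g}) \<and> PH1"
    then obtain g h where g: "dominating_set VG EG {g}" and h: "power_dominating_set VH EH {h}"
      using PH1_def by blast
    have gV: "g \<in> VG" "closed_nbhd_set VG EG {g} = VG" using g domG by auto
    have hV: "h \<in> VH" "zf_closure VH EH (closed_nbhd_set VH EH {h}) = VH" using h pdsH by auto
    have "power_dominating_set (VG\<times>VH) (lex_edges VG EG VH EH) {(g,h)}"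
    proof (rule prod_cover[OF sG sH])
      show "{(g,h)} \<subseteq> VG\<times>VH" using gV hV by auto
      show "\<forall>x\<in>VG. (\<exists>h'. (x,h') \<in> {(g,h)} \<and> zf_closure VH EH (closed_nbhd_set VH EH {h'}) = VH) \<or> (\<exists>s\<in>{(g,h)}. EG (fst s) x)"
        using gV hV by (auto simp: closed_nbhd_set_def)
    qed
    then show "\<exists>p. power_dominating_set (VG\<times>VH) (lex_edges VG EG VH EH) {p}" by blast
  qed
  have part2: "(\<exists>p q. p \<noteq> q \<and> power_dominating_set (VG\<times>VH) (lex_edges VG EG VH EH) {p,q})
     \<and> \<not>(\<exists>p. power_dominating_set (VG\<times>VH) (lex_edges VG EG VH EH) {p}) \<longleftrightarrow>
      (\<not>(\<exists>g. dominating_set VG EG {g}) \<and> (\<exists>a b. a \<noteq> b \<and> dominating_set VG EG {a,b}) \<and> PH1)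
      \<or> (DE \<and> \<not> PH1)"
  proof
    assume a: "(\<exists>p q. p \<noteq> q \<and> power_dominating_set (VG\<times>VH) (lex_edges VG EG VH EH) {p,q})
     \<and> \<not>(\<exists>p. power_dominating_set (VG\<times>VH) (lex_edges VG EG VH EH) {p})"
    then obtain p q where "power_dominating_set (VG\<times>VH) (lex_edges VG EG VH EH) {p,q}"
      by blast
    moreover obtain g1 h1 where "p = (g1,h1)" by fastforce
    moreover obtain g2 h2 where "q = (g2,h2)" by fastforce
    ultimately have pq: "power_dominating_set (VG\<times>VH) (lex_edges VG EG VH EH) {(g1,h1),(g2,h2)}"
      by simp
    have inP: "g1 \<in> VG" "h1 \<in> VH" "g2 \<in> VG" "h2 \<in> VH" using pq pdsP by auto
    have dom: "dominating_set VG EG {g1,g2}"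
      using prod_dom[OF sG c2H, of "{(g1,h1),(g2,h2)}" EH] pq pdsP by simp
    show "(\<not>(\<exists>g. dominating_set VG EG {g}) \<and> (\<exists>a b. a \<noteq> b \<and> dominating_set VG EG {a,b}) \<and> PH1)
      \<or> (DE \<and> \<not> PH1)"
    proof (cases PH1)
      case True
      then have nD1: "\<not>(\<exists>g. dominating_set VG EG {g})" using part1 a by blast
      then have "g1 \<noteq> g2" using dom by auto
      then show ?thesis using nD1 dom True by blast
    next
      case False
      show ?thesis
      proof (cases "g1 = g2")
        case True
        then have "dominating_set VG EG {g1}" using dom by simp
        then have "DE" by (rule D1DE)
        then show ?thesis using False by blast
      next
        case ne: False
        have "EG g1 g2"
        proof (rule ccontr)
          assume nE: "\<not> EG g1 g2"
          have "zf_closure VH EH (closed_nbhd_set VH EH {h1}) \<noteq> VH" using False inP pdsH PH1_def by blast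
          moreover have "{(g1,h1),(g2,h2)} \<subseteq> VG \<times> VH" using inP by simp
          moreover have "\<forall>s\<in>{(g1,h1),(g2,h2)}. s = (g1,h1) \<or> (fst s \<noteq> g1 \<and> \<not> EG (fst s) g1)"
            using ne nE symG by auto
          ultimately have "zf_closure (VG\<times>VH) (lex_edges VG EG VH EH) (closed_nbhd_set (VG\<times>VH) (lex_edges VG EG VH EH) {(g1,h1),(g2,h2)}) \<noteq> VG\<times>VH"
            using prod_block[OF sG sH cH c2H inP(1,2)] by blast
          then show False using pq unfolding power_dominating_set_def by blast
        qed
        moreover have "\<forall>w\<in>VG. w = g1 \<or> w = g2 \<or> EG g1 w \<or> EG g2 w"
          using dom domG by (auto simp: closed_nbhd_set_def)
        ultimately show ?thesis using False DE_def by blast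
      qed
    qed
  next
    assume b: "(\<not>(\<exists>g. dominating_set VG EG {g}) \<and> (\<exists>a b. a \<noteq> b \<and> dominating_set VG EG {a,b}) \<and> PH1)
      \<or> (DE \<and> \<not> PH1)"
    show "(\<exists>p q. p \<noteq> q \<and> power_dominating_set (VG\<times>VH) (lex_edges VG EG VH EH) {p,q})
     \<and> \<not>(\<exists>p. power_dominating_set (VG\<times>VH) (lex_edges VG EG VH EH) {p})"
    proof (cases "\<not>(\<exists>g. dominating_set VG EG {g}) \<and> (\<exists>a b. a \<noteq> b \<and> dominating_set VG EG {a,b}) \<and> PH1")
      case True
      then obtain g1 g2 h where g: "g1 \<noteq> g2" "dominating_set VG EG {g1,g2}"
        and h: "power_dominating_set VH EH {h}" using PH1_def by blast
      have gV: "g1 \<in> VG" "g2 \<in> VG" "closed_nbhd_set VG EG {g1,g2} = VG" using g domG by auto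
      have hV: "h \<in> VH" "zf_closure VH EH (closed_nbhd_set VH EH {h}) = VH" using h pdsH by auto
      have "power_dominating_set (VG\<times>VH) (lex_edges VG EG VH EH) {(g1,h),(g2,h)}"
      proof (rule prod_cover[OF sG sH])
        show "{(g1,h),(g2,h)} \<subseteq> VG\<times>VH" using gV hV by auto
        show "\<forall>x\<in>VG. (\<exists>h'. (x,h') \<in> {(g1,h),(g2,h)} \<and> zf_closure VH EH (closed_nbhd_set VH EH {h'}) = VH) \<or> (\<exists>s\<in>{(g1,h),(g2,h)}. EG (fst s) x)"
          using gV hV by (auto simp: closed_nbhd_set_def)
      qed
      then show ?thesis using g(1) True part1 by blast
    next
      case False
      then have "DE" "\<not> PH1" using b by auto
      then obtain u v where uv: "EG u v" "\<forall>w\<in>VG. w = u \<or> w = v \<or> EG u w \<or> EG v w" using DE_def by blast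
      have uV: "u \<in> VG" "v \<in> VG" "u \<noteq> v" using uv EGin irrG by auto
      have "power_dominating_set (VG\<times>VH) (lex_edges VG EG VH EH) {(u,h0),(v,h0)}"
      proof (rule prod_cover[OF sG sH])
        show "{(u,h0),(v,h0)} \<subseteq> VG\<times>VH" using uV h0 by auto
        show "\<forall>x\<in>VG. (\<exists>h'. (x,h') \<in> {(u,h0),(v,h0)} \<and> zf_closure VH EH (closed_nbhd_set VH EH {h'}) = VH) \<or> (\<exists>s\<in>{(u,h0),(v,h0)}. EG (fst s) x)"
        proof
          fix x assume x: "x \<in> VG"
          have "x = u \<or> x = v \<or> EG u x \<or> EG v x" using uv x by blast
          then have "EG v x \<or> EG u x" using uv(1) symG by blast
          then show "(\<exists>h'. (x,h') \<in> {(u,h0),(v,h0)} \<and> zf_closure VH EH (closed_nbhd_set VH EH {h'}) = VH) \<or> (\<exists>s\<in>{(u,h0),(v,h0)}. EG (fst s) x)"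
            by auto
        qed
      qed
      then show ?thesis using uV \<open>\<not> PH1\<close> part1 by blast
    qed
  qed
  define Q1 where "Q1 = (\<exists>p. power_dominating_set (VG\<times>VH) (lex_edges VG EG VH EH) {p})"
  define Q2 where "Q2 = (\<exists>p q. p \<noteq> q \<and> power_dominating_set (VG\<times>VH) (lex_edges VG EG VH EH) {p,q})"
  define D1 where "D1 = (\<exists>g. dominating_set VG EG {g})"
  define D2 where "D2 = (\<exists>a b. a \<noteq> b \<and> dominating_set VG EG {a,b})"
  have e1: "power_domination_number (VG \<times> VH) (lex_edges VG EG VH EH) = 1 \<longleftrightarrow> Q1" using P(1) Q1_def by simp
  have e2: "power_domination_number (VG \<times> VH) (lex_edges VG EG VH EH) = 2 \<longleftrightarrow> \<not> Q1 \<and> Q2" using P(2) Q1_def Q2_def by simp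
  have e3: "domination_number VG EG = 1 \<longleftrightarrow> D1" using D(1) D1_def by simp
  have e4: "domination_number VG EG = 2 \<longleftrightarrow> \<not> D1 \<and> D2" using D(2) D1_def D2_def by simp
  have e5: "power_domination_number VH EH = 1 \<longleftrightarrow> PH1" using H(1) PH1_def by simp
  have e6: "diam VG (complement VG EG) > 2 \<longleftrightarrow> DE" using DI DE_def by simp
  have p1: "Q1 \<longleftrightarrow> D1 \<and> PH1" using part1 Q1_def D1_def by simp
  have p2: "Q2 \<and> \<not> Q1 \<longleftrightarrow> (\<not> D1 \<and> D2 \<and> PH1) \<or> (DE \<and> \<not> PH1)"
    using part2 unfolding Q1_def Q2_def D1_def D2_def by simp
  show ?thesis unfolding e1 e2 e3 e4 e5 e6 Hgt using p1 p2 by blast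
qed


end
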